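(* Let $(X,d)$ be an $F$-space with non-decreasing metric $d$ and let $\mathcal{E}(x)=\{e_n(x)\}_{n=0}^\infty$ be a scale on $X$. The following are equivalent: (i) there exists $\{\varepsilon_n\}\searrow0$ such that $e_n(x)=\mathbf{O}(\varepsilon_n)$ for all $x\in X$; (ii) there exist $\{\varepsilon_n\}\searrow0$, $C>0$ and $r_0>0$ such that $e_n(x)\le C\varepsilon_n$ for all $n\in\mathbb{N}$ and all $x\in B(0,r_0)$. Consequently, the scale $\mathcal{E}$ satisfies Shapiro's theorem on $X$ if and only if $$\inf_{n\in\mathbb{N}}\ \sup_{x\in B(0,r)\cap X_{\mathcal{E}}}e_n(x)>0\quad\text{for all } r>0.$$
   Context: An $F$-space is a complete metric vector space with translation-invariant metric $d$; $d$ is non-decreasing if $d(\alpha x,0)\le d(x,0)$ for $0\le\alpha\le1$. Write $\|x\|=d(x,0)$ and $B(0,r)=\{x:d(x,0)\le r\}$. A map $\mathcal{E}:X\to\ell^\infty$, $\mathcal{E}(x)=\{e_n(x)\}_{n=0}^\infty$ with each $e_n:X\to[0,\infty)$, is a scale on $X$ if: (i) there is $C_1>0$ with $C_1\|x\|\ge e_n(x)\ge e_{n+1}(x)$ for all $x,n$, and each $e_n$ is continuous; (ii) there exist a strictly increasing $K:\mathbb{N}\to\mathbb{N}$ and $C_2>0$ with $e_{K(n)}(x+y)\le C_2(e_n(x)+e_n(y))$ for all $x,y,n$; (iii) there is $\phi:[0,\infty)\to[0,\infty)$ with $e_n(\lambda x)\le\phi(|\lambda|)e_n(x)$ for all scalars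 $\lambda$, and $e_n(-x)=e_n(x)$. $X_{\mathcal{E}}=\{x\in X:\mathcal{E}(x)\in c_0\}$. The scale $\mathcal{E}$ satisfies Shapiro's theorem if for every non-increasing sequence $\{\varepsilon_n\}\in c_0$ of nonnegative reals there exists $x\in X_{\mathcal{E}}$ with $e_n(x)\neq\mathbf{O}(\varepsilon_n)$. The notation $\{\varepsilon_n\}\searrow0$ means a non-increasing sequence of nonnegative reals converging to $0$. *)

theory Defs
  imports "HOL-Analysis.Analysis" "HOL-Library.Landau_Symbols"
begin

text \<open>F-space over the reals: a real vector space with a translation-invariant
 metric d, for which scalar multiplication is (jointly, sequentially) continuous
 (continuity of addition follows from translation invariance), and which is complete.\<close>
definition F_space :: "('a::real_vector \<Rightarrow> 'a \<Rightarrow> real) \<Rightarrow> bool" where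
  "F_space d \<longleftrightarrow>
     (\<forall>x y. d x y = 0 \<longleftrightarrow> x = y) \<and>
     (\<forall>x y. d x y = d y x) \<and>
     (\<forall>x y z. d x z \<le> d x y + d y z) \<and>
     (\<forall>x y z. d (x + z) (y + z) = d x y) \<and>
     (\<forall>(t::nat \<Rightarrow> real) c (s::nat \<Rightarrow> 'a) x.
        t \<longlonglongrightarrow> c \<longrightarrow> (\<lambda>k. d (s k) x) \<longlonglongrightarrow> 0 \<longrightarrow>
        (\<lambda>k. d (t k *\<^sub>R s k) (c *\<^sub>R x)) \<longlonglongrightarrow> 0) \<and>
     (\<forall>s::nat \<Rightarrow> 'a. (\<forall>\<epsilon>>0. \<exists>N. \<forall>m\<ge>N. \<forall>n\<ge>N. d (s m) (s n) < \<epsilon>) \<longrightarrow>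
        (\<exists>x. (\<lambda>k. d (s k) x) \<longlonglongrightarrow> 0))"

definition nondecreasing_metric :: "('a::real_vector \<Rightarrow> 'a \<Rightarrow> real) \<Rightarrow> bool" where
  "nondecreasing_metric d \<longleftrightarrow>
     (\<forall>x (\<alpha>::real). 0 \<le> \<alpha> \<and> \<alpha> \<le> 1 \<longrightarrow> d (\<alpha> *\<^sub>R x) 0 \<le> d x 0)"

text \<open>A scale E = {e_n} on (X,d); e n x stands for e_n(x). Membership of E(x) in
 l-infinity is implied by condition (i).\<close>
definition is_scale :: "('a::real_vector \<Rightarrow> 'a \<Rightarrow> real) \<Rightarrow> (nat \<Rightarrow> 'a \<Rightarrow> real) \<Rightarrow> bool" where
  "is_scale d e \<longleftrightarrow>
     (\<forall>n x. 0 \<le> e n x) \<and>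
     (\<exists>C1>0. \<forall>x n. e n x \<le> C1 * d x 0 \<and> e (Suc n) x \<le> e n x) \<and>
     (\<forall>n (s::nat \<Rightarrow> 'a) x. (\<lambda>k. d (s k) x) \<longlonglongrightarrow> 0 \<longrightarrow> (\<lambda>k. e n (s k)) \<longlonglongrightarrow> e n x) \<and>
     (\<exists>(K::nat \<Rightarrow> nat) C2. strict_mono K \<and> C2 > 0 \<and>
        (\<forall>x y n. e (K n) (x + y) \<le> C2 * (e n x + e n y))) \<and>
     (\<exists>\<phi>::real \<Rightarrow> real. (\<forall>t\<ge>0. \<phi> t \<ge> 0) \<and>
        (\<forall>n x (c::real). e n (c *\<^sub>R x) \<le> \<phi> \<bar>c\<bar> * e n x)) \<and>
     (\<forall>n x. e n (- x) = e n x)"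

definition scale_space :: "(nat \<Rightarrow> 'a \<Rightarrow> real) \<Rightarrow> 'a set" where
  "scale_space e = {x. (\<lambda>n. e n x) \<longlonglongrightarrow> 0}"

definition decr_to_zero :: "(nat \<Rightarrow> real) \<Rightarrow> bool" where
  "decr_to_zero \<epsilon> \<longleftrightarrow> (\<forall>n. 0 \<le> \<epsilon> n) \<and> decseq \<epsilon> \<and> \<epsilon> \<longlonglongrightarrow> 0"

definition satisfies_Shapiro :: "(nat \<Rightarrow> 'a \<Rightarrow> real) \<Rightarrow> bool" where
  "satisfies_Shapiro e \<longleftrightarrow>
     (\<forall>\<epsilon>. decr_to_zero \<epsilon> \<longrightarrow> (\<exists>x\<in>scale_space e. (\<lambda>n. e n x) \<notin> O(\<epsilon>)))"

end

theory Submission imports Defs begin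

lemma reindex:
  assumes "strict_mono (K::nat\<Rightarrow>nat)"
  shows "\<exists>j. mono j \<and> filterlim j at_top sequentially \<and> (\<forall>m. K 0 \<le> m \<longrightarrow> K (j m) \<le> m) \<and> (\<forall>m. m < K 0 \<longrightarrow> j m = 0)"
proof -
  define j where "j m = (if K 0 \<le> m then GREATEST n. K n \<le> m else 0)" for m
  have bnd: "K n \<le> m \<Longrightarrow> n \<le> m" for n m using seq_suble[OF assms, of n] by linarith
  have G1: "K (j m) \<le> m" if "K 0 \<le> m" for m
    using GreatestI_nat[of "\<lambda>n. K n \<le> m" 0 m] that bnd unfolding j_def by auto
  have G2: "n \<le> j m" if "K n \<le> m" for n m
  proof -
    have "K 0 \<le> K n" using assms by (simp add: strict_mono_less_eq)
    then show ?thesis using Greatest_le_nat[of "\<lambda>n. K n \<le> m" n m] that bnd unfolding j_def by auto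
  qed
  have "mono j"
  proof (rule monoI)
    fix m m' :: nat assume "m \<le> m'"
    show "j m \<le> j m'"
    proof (cases "K 0 \<le> m")
      case True then show ?thesis using G1[OF True] G2[of "j m" m'] \<open>m \<le> m'\<close> by linarith
    qed (simp add: j_def)
  qed
  moreover have "filterlim j at_top sequentially"
    unfolding filterlim_at_top eventually_sequentially using G2 by blast
  ultimately show ?thesis using G1 by (auto simp: j_def)
qed

locale fsc =
  fixes d :: "'a::real_vector \<Rightarrow> 'a \<Rightarrow> real" and e :: "nat \<Rightarrow> 'a \<Rightarrow> real"
    and K :: "nat \<Rightarrow> nat" and C1 C2 :: real and \<phi> :: "real \<Rightarrow> real"
  assumes F: "F_space d"
    and enn: "\<And>n x. 0 \<le> e n x"
    and C1pos: "C1 > 0" and C1b: "\<And>x n. e n x \<le> C1 * d x 0" and edec1: "\<And>x n. e (Suc n) x \<le> e n x"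
    and econt: "\<And>n s x. (\<lambda>k. d (s k) x) \<longlonglongrightarrow> 0 \<Longrightarrow> (\<lambda>k. e n (s k)) \<longlonglongrightarrow> e n x"
    and Kmono: "strict_mono K" and C2pos: "C2 > 0" and Kadd: "\<And>x y n. e (K n) (x+y) \<le> C2*(e n x + e n y)"
    and phi: "\<And>n x c. e n (c *\<^sub>R x) \<le> \<phi> \<bar>c\<bar> * e n x"
    and esym: "\<And>n x. e n (-x) = e n x"
begin

lemma d0: "d x y = 0 \<longleftrightarrow> x = y" using F unfolding F_space_def by blast
lemma dsym: "d x y = d y x" using F unfolding F_space_def by blast
lemma dtri: "d x z \<le> d x y + d y z" using F unfolding F_space_def by blast
lemma dtrans: "d (x + z) (y + z) = d x y" using F unfolding F_space_def by blast
lemma dnn: "0 \<le> d x y"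
proof -
  have "0 \<le> d x y + d y x" using dtri[where x=x and y=y and z=x] d0[of x x] by simp
  then show ?thesis using dsym[of x y] by simp
qed
lemma dxx[simp]: "d x x = 0" using d0 by simp
lemma dminus: "d x y = d (x - y) 0" using dtrans[of x "-y" y] by simp

lemma dmult: "t \<longlonglongrightarrow> c \<Longrightarrow> (\<lambda>k. d (s k) x) \<longlonglongrightarrow> 0 \<Longrightarrow> (\<lambda>k. d (t k *\<^sub>R s k) (c *\<^sub>R x)) \<longlonglongrightarrow> 0"
  using F unfolding F_space_def by blast

lemma dcomplete: "(\<forall>\<epsilon>>0. \<exists>N. \<forall>m\<ge>N. \<forall>n\<ge>N. d (s m) (s n) < \<epsilon>) \<Longrightarrow> (\<exists>x. (\<lambda>k. d (s k) x) \<longlonglongrightarrow> 0)"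
  using F unfolding F_space_def by blast

lemma e0[simp]: "e n 0 = 0" using C1b[of n 0] enn[of n 0] by simp

lemma edec: "m \<le> n \<Longrightarrow> e n x \<le> e m x"
proof -
  have "decseq (\<lambda>n. e n x)" by (rule decseq_SucI) (rule edec1)
  then show "m \<le> n \<Longrightarrow> e n x \<le> e m x" by (simp add: decseq_def)
qed

lemma small: assumes "r > 0" shows "\<exists>c>0. d (c *\<^sub>R x) 0 < r"
proof -
  have t: "(\<lambda>k. inverse (real (Suc k))) \<longlonglongrightarrow> 0"
    using LIMSEQ_inverse_real_of_nat_add[of 0] by simp
  have "(\<lambda>k. d (inverse (real (Suc k)) *\<^sub>R x) (0 *\<^sub>R x)) \<longlonglongrightarrow> 0"
    by (rule dmult[OF t]) simp
  then obtain k where "norm (d (inverse (real (Suc k)) *\<^sub>R x) 0 - 0) < r"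
    using LIMSEQ_D[OF _ assms] by fastforce
  then show ?thesis using dnn by (intro exI[of _ "inverse (real (Suc k))"]) auto
qed

lemma unscale: "c > 0 \<Longrightarrow> e n x \<le> \<phi> (1/c) * e n (c *\<^sub>R x)"
  using phi[of n "1/c" "c *\<^sub>R x"] by simp


lemma getj: obtains j where "mono j" "filterlim j at_top sequentially"
  "\<And>m. K 0 \<le> m \<Longrightarrow> K (j m) \<le> m" "\<And>m. m < K 0 \<Longrightarrow> j m = 0"
  using reindex[OF Kmono] by blast

lemma tail:
  assumes "\<And>n. e (K n) x \<le> g n" "g \<longlonglongrightarrow> 0"
  shows "(\<lambda>m. e m x) \<longlonglongrightarrow> 0"
proof -
  obtain j where j: "mono j" "filterlim j at_top sequentially"
    "\<And>m. K 0 \<le> m \<Longrightarrow> K (j m) \<le> m" "\<And>m. m < K 0 \<Longrightarrow> j m = 0" using getj by metis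
  have gj: "(\<lambda>m. g (j m)) \<longlonglongrightarrow> 0"
    using filterlim_compose[OF assms(2) j(2)] by simp
  show ?thesis
  proof (rule tendsto_sandwich[OF _ _ tendsto_const gj])
    show "\<forall>\<^sub>F m in sequentially. 0 \<le> e m x" using enn by simp
    show "\<forall>\<^sub>F m in sequentially. e m x \<le> g (j m)"
      unfolding eventually_sequentially
    proof (intro exI allI impI)
      fix m assume "K 0 \<le> m"
      then have "e m x \<le> e (K (j m)) x" using edec j(3) by blast
      also have "\<dots> \<le> g (j m)" using assms(1) .
      finally show "e m x \<le> g (j m)" .
    qed
  qed
qed

lemma XE_add: assumes "x \<in> scale_space e" "y \<in> scale_space e" shows "x + y \<in> scale_space e"
proof -
  have "(\<lambda>n. C2 * (e n x + e n y)) \<longlonglongrightarrow> C2 * (0 + 0)"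
    using assms unfolding scale_space_def by (intro tendsto_intros) auto
  then show ?thesis unfolding scale_space_def mem_Collect_eq
    by (intro tail[where g="\<lambda>n. C2 * (e n x + e n y)"]) (simp_all add: Kadd)
qed

lemma XE_scale: assumes "x \<in> scale_space e" shows "c *\<^sub>R x \<in> scale_space e"
proof -
  have "(\<lambda>n. \<phi> \<bar>c\<bar> * e n x) \<longlonglongrightarrow> \<phi> \<bar>c\<bar> * 0"
    using assms unfolding scale_space_def by (intro tendsto_intros) auto
  show ?thesis unfolding scale_space_def mem_Collect_eq
  proof (rule tendsto_sandwich[OF _ _ tendsto_const])
    show "\<forall>\<^sub>F n in sequentially. 0 \<le> e n (c *\<^sub>R x)" by (simp add: enn)
    show "\<forall>\<^sub>F n in sequentially. e n (c *\<^sub>R x) \<le> \<phi> \<bar>c\<bar> * e n x" by (simp add: phi)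
  qed (use \<open>(\<lambda>n. \<phi> \<bar>c\<bar> * e n x) \<longlonglongrightarrow> \<phi> \<bar>c\<bar> * 0\<close> in simp)
qed

lemma XE_zero: "0 \<in> scale_space e" unfolding scale_space_def by simp

lemma XE_closed:
  assumes s: "\<And>k. s k \<in> scale_space e" and lim: "(\<lambda>k. d (s k) x) \<longlonglongrightarrow> 0"
  shows "x \<in> scale_space e"
proof -
  obtain j where j: "mono j" "filterlim j at_top sequentially"
    "\<And>m. K 0 \<le> m \<Longrightarrow> K (j m) \<le> m" "\<And>m. m < K 0 \<Longrightarrow> j m = 0" using getj by metis
  have key: "e m x \<le> C2 * (C1 * d (s k) x + e (j m) (s k))" if "K 0 \<le> m" for m k
  proof -
    have "e m x \<le> e (K (j m)) x" using edec j(3) that by blast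
    also have "\<dots> = e (K (j m)) ((x - s k) + s k)" by simp
    also have "\<dots> \<le> C2 * (e (j m) (x - s k) + e (j m) (s k))" by (rule Kadd)
    also have "\<dots> \<le> C2 * (C1 * d (s k) x + e (j m) (s k))"
    proof -
      have "e (j m) (x - s k) \<le> C1 * d (x - s k) 0" by (rule C1b)
      also have "\<dots> = C1 * d (s k) x" using dminus[of x "s k"] dsym[of x "s k"] by simp
      finally show ?thesis using C2pos by simp
    qed
    finally show ?thesis .
  qed
  show ?thesis unfolding scale_space_def mem_Collect_eq
  proof (rule LIMSEQ_I)
    fix \<eta> :: real assume "0 < \<eta>"
    have p: "0 < \<eta> / (2 * C2 * C1)" "0 < \<eta> / (2 * C2)" using \<open>0 < \<eta>\<close> C1pos C2pos by auto
    obtain k where k: "d (s k) x < \<eta> / (2 * C2 * C1)"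
      using LIMSEQ_D[OF lim p(1)] dnn by fastforce
    have "(\<lambda>n. e n (s k)) \<longlonglongrightarrow> 0" using s unfolding scale_space_def by blast
    then obtain N1 where N1: "\<And>n. n \<ge> N1 \<Longrightarrow> e n (s k) < \<eta> / (2 * C2)"
      using LIMSEQ_D[OF _ p(2)] enn by fastforce
    obtain N2 where N2: "\<And>m. m \<ge> N2 \<Longrightarrow> N1 \<le> j m"
      using j(2) unfolding filterlim_at_top eventually_sequentially by blast
    show "\<exists>no. \<forall>m\<ge>no. norm (e m x - 0) < \<eta>"
    proof (intro exI allI impI)
      fix m assume m: "max (K 0) N2 \<le> m"
      have "e m x \<le> C2 * (C1 * d (s k) x + e (j m) (s k))" using key m by simp
      also have "\<dots> < C2 * (C1 * (\<eta> / (2 * C2 * C1)) + \<eta> / (2 * C2))"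
        using k N1[of "j m"] N2[of m] m C1pos C2pos by (intro mult_strict_left_mono add_strict_mono) auto
      also have "\<dots> = \<eta>" using C1pos C2pos by (simp add: field_simps)
      finally show "norm (e m x - 0) < \<eta>" using enn[of m x] by simp
    qed
  qed
qed

lemma ms: "Metric_space S d"
proof (rule Metric_space.intro)
  show "\<And>x y. 0 \<le> d x y" by (rule dnn)
  show "\<And>x y. d x y = d y x" by (rule dsym)
  show "\<And>x y. x \<in> S \<Longrightarrow> y \<in> S \<Longrightarrow> d x y = 0 \<longleftrightarrow> x = y" by (rule d0)
  show "\<And>x y z. x \<in> S \<Longrightarrow> y \<in> S \<Longrightarrow> z \<in> S \<Longrightarrow> d x z \<le> d x y + d y z" by (rule dtri)
qed

lemma mcomp:
  assumes cl: "\<And>s x. (\<And>k. s k \<in> S) \<Longrightarrow> (\<lambda>k. d (s k) x) \<longlonglongrightarrow> 0 \<Longrightarrow> x \<in> S"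
  shows "Metric_space.mcomplete S d"
proof -
  interpret M: Metric_space S d by (rule ms)
  show ?thesis unfolding M.mcomplete_def
  proof (intro allI impI)
    fix \<sigma> assume c: "M.MCauchy \<sigma>"
    have "\<forall>\<epsilon>>0. \<exists>N. \<forall>m\<ge>N. \<forall>n\<ge>N. d (\<sigma> m) (\<sigma> n) < \<epsilon>"
    proof (intro allI impI)
      fix \<epsilon> :: real assume "\<epsilon> > 0"
      then obtain N where "\<forall>n n'. N \<le> n \<longrightarrow> N \<le> n' \<longrightarrow> d (\<sigma> n) (\<sigma> n') < \<epsilon>"
        using c unfolding M.MCauchy_def by auto
      then show "\<exists>N. \<forall>m\<ge>N. \<forall>n\<ge>N. d (\<sigma> m) (\<sigma> n) < \<epsilon>" by blast
    qed
    then obtain x where x: "(\<lambda>k. d (\<sigma> k) x) \<longlonglongrightarrow> 0" using dcomplete[of \<sigma>] by blast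
    have r: "\<sigma> k \<in> S" for k using c unfolding M.MCauchy_def by blast
    have "x \<in> S" using cl[OF r x] .
    moreover have "\<exists>N. \<forall>n\<ge>N. \<sigma> n \<in> S \<and> d (\<sigma> n) x < \<epsilon>" if eps: "\<epsilon> > 0" for \<epsilon>
    proof -
      obtain N where N: "\<forall>n\<ge>N. norm (d (\<sigma> n) x - 0) < \<epsilon>" using LIMSEQ_D[OF x eps] by blast
      have "\<forall>n\<ge>N. \<sigma> n \<in> S \<and> d (\<sigma> n) x < \<epsilon>"
      proof (intro allI impI conjI)
        fix n assume "N \<le> n"
        then have "norm (d (\<sigma> n) x - 0) < \<epsilon>" using N by blast
        then show "d (\<sigma> n) x < \<epsilon>" by simp
      qed (rule r)
      then show ?thesis by blast
    qed
    ultimately show "\<exists>x. limitin M.mtopology \<sigma> x sequentially"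
      unfolding M.limit_metric_sequentially by blast
  qed
qed


lemma baire_bound:
  assumes cl: "\<And>s x. (\<And>k. s k \<in> S) \<Longrightarrow> (\<lambda>k. d (s k) x) \<longlonglongrightarrow> 0 \<Longrightarrow> x \<in> S"
    and S0: "0 \<in> S" and Sadd: "\<And>x y. x \<in> S \<Longrightarrow> y \<in> S \<Longrightarrow> x + y \<in> S"
    and eps: "decr_to_zero \<epsilon>" "\<And>n. \<epsilon> n > 0"
    and bnd: "\<And>x. x \<in> S \<Longrightarrow> \<exists>c. \<forall>n. e n x \<le> c * \<epsilon> n"
  shows "\<exists>\<epsilon>' C r0. decr_to_zero \<epsilon>' \<and> C > 0 \<and> r0 > 0 \<and>
           (\<forall>n x. x \<in> S \<longrightarrow> d x 0 \<le> r0 \<longrightarrow> e n x \<le> C * \<epsilon>' n)"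
proof -
  interpret M: Metric_space S d by (rule ms)
  have mc: M.mcomplete by (rule mcomp) (rule cl)
  define F where "F k = {x\<in>S. \<forall>n. e n x \<le> real k * \<epsilon> n}" for k :: nat
  have clF: "closedin M.mtopology (F k)" for k
    unfolding M.metric_closedin_iff_sequentially_closed
  proof (intro conjI allI impI)
    show "F k \<subseteq> S" unfolding F_def by blast
    fix \<sigma> l assume a: "range \<sigma> \<subseteq> F k \<and> limitin M.mtopology \<sigma> l sequentially"
    then have lS: "l \<in> S" and lim: "\<forall>\<epsilon>>0. \<exists>N. \<forall>n\<ge>N. \<sigma> n \<in> S \<and> d (\<sigma> n) l < \<epsilon>"
      unfolding M.limit_metric_sequentially by blast+
    have dl: "(\<lambda>i. d (\<sigma> i) l) \<longlonglongrightarrow> 0"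
    proof (rule LIMSEQ_I)
      fix r :: real assume "0 < r"
      then obtain N where "\<forall>n\<ge>N. \<sigma> n \<in> S \<and> d (\<sigma> n) l < r" using lim by blast
      then show "\<exists>no. \<forall>n\<ge>no. norm (d (\<sigma> n) l - 0) < r" using dnn by auto
    qed
    have "e n l \<le> real k * \<epsilon> n" for n
    proof (rule LIMSEQ_le_const2[OF econt[OF dl]])
      show "\<exists>N. \<forall>i\<ge>N. e n (\<sigma> i) \<le> real k * \<epsilon> n" using a unfolding F_def by blast
    qed
    then show "l \<in> F k" using lS unfolding F_def by blast
  qed
  have UF: "\<Union>(range F) = S"
  proof
    show "\<Union>(range F) \<subseteq> S" unfolding F_def by blast
    show "S \<subseteq> \<Union>(range F)"
    proof
      fix x assume "x \<in> S"
      then obtain c where c: "\<forall>n. e n x \<le> c * \<epsilon> n" using bnd by blast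
      have "c \<le> real (nat \<lceil>c\<rceil>)" by linarith
      then have "\<forall>n. e n x \<le> real (nat \<lceil>c\<rceil>) * \<epsilon> n"
        using c eps(2) by (meson less_eq_real_def mult_right_mono order_trans)
      then show "x \<in> \<Union>(range F)" using \<open>x \<in> S\<close> unfolding F_def by blast
    qed
  qed
  have "\<exists>k. M.mtopology interior_of F k \<noteq> {}"
  proof (rule ccontr)
    assume "\<not> ?thesis"
    then have "M.mtopology interior_of \<Union>(range F) = {}"
      by (intro M.metric_Baire_category_alt mc) (auto simp: clF)
    moreover have "M.mtopology interior_of S = S"
      using interior_of_topspace[of M.mtopology] by simp
    ultimately show False using UF S0 by auto
  qed
  then obtain k x0 where x0: "x0 \<in> M.mtopology interior_of F k" by blast
  then obtain r where r: "r > 0" "M.mball x0 r \<subseteq> M.mtopology interior_of F k"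
    using openin_interior_of[of M.mtopology "F k"] unfolding M.openin_mtopology by blast
  have x0S: "x0 \<in> S" using x0 interior_of_subset[of M.mtopology "F k"] unfolding F_def by blast
  have ball: "y \<in> F k" if "y \<in> S" "d x0 y < r" for y
    using r(2) interior_of_subset[of M.mtopology "F k"] that x0S by auto
  have x0F: "x0 \<in> F k" using ball[OF x0S] r(1) by simp
  define B where "B = 2 * C2 * real k"
  have B0: "B \<ge> 0" unfolding B_def using C2pos by simp
  have keyK: "e (K n) x \<le> B * \<epsilon> n" if "x \<in> S" "d x 0 \<le> r/2" for x n
  proof -
    have "d x0 (x0 + x) = d x 0" using dtrans[of 0 x0 x] dsym by (simp add: add.commute)
    then have "x0 + x \<in> F k" using that r(1) Sadd[OF x0S that(1)] by (intro ball) auto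
    then have a1: "e n (x0 + x) \<le> real k * \<epsilon> n" unfolding F_def by blast
    have a2: "e n (- x0) \<le> real k * \<epsilon> n" using x0F esym unfolding F_def by auto
    have "e (K n) x = e (K n) ((x0 + x) + (- x0))" by (simp add: algebra_simps)
    also have "\<dots> \<le> C2 * (e n (x0 + x) + e n (- x0))" by (rule Kadd)
    also have "\<dots> \<le> C2 * (real k * \<epsilon> n + real k * \<epsilon> n)"
      using a1 a2 C2pos by (intro mult_left_mono add_mono) auto
    also have "\<dots> = B * \<epsilon> n" unfolding B_def by simp
    finally show ?thesis .
  qed
  obtain j where j: "mono j" "filterlim j at_top sequentially"
    "\<And>m. K 0 \<le> m \<Longrightarrow> K (j m) \<le> m" "\<And>m. m < K 0 \<Longrightarrow> j m = 0" using getj by metis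
  define \<epsilon>' where "\<epsilon>' m = \<epsilon> (j m)" for m
  define C where "C = B + C1 * r / \<epsilon> 0 + 1"
  have epos: "\<epsilon> 0 > 0" by (rule eps(2))
  have "C1 * r / \<epsilon> 0 \<ge> 0" using C1pos r(1) epos by simp
  then have Cpos: "C > 0" and CB: "B \<le> C" and CC: "C1 * r / \<epsilon> 0 \<le> C" unfolding C_def using B0 by auto
  have dec': "decr_to_zero \<epsilon>'"
  proof -
    have "decseq \<epsilon>" "\<epsilon> \<longlonglongrightarrow> 0" using eps(1) unfolding decr_to_zero_def by auto
    then have "decseq \<epsilon>'" unfolding \<epsilon>'_def decseq_def using j(1) by (simp add: monoD)
    moreover have "\<epsilon>' \<longlonglongrightarrow> 0" unfolding \<epsilon>'_def
      using filterlim_compose[OF \<open>\<epsilon> \<longlonglongrightarrow> 0\<close> j(2)] by (simp add: o_def)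
    ultimately show ?thesis unfolding decr_to_zero_def \<epsilon>'_def using eps(2) less_imp_le by blast
  qed
  have "e m x \<le> C * \<epsilon>' m" if "x \<in> S" "d x 0 \<le> r/2" for m x
  proof (cases "K 0 \<le> m")
    case True
    have "e m x \<le> e (K (j m)) x" using edec j(3)[OF True] by blast
    also have "\<dots> \<le> B * \<epsilon>' m" unfolding \<epsilon>'_def by (rule keyK[OF that])
    also have "\<dots> \<le> C * \<epsilon>' m" using CB eps(2) unfolding \<epsilon>'_def by (simp add: mult_right_mono)
    finally show ?thesis .
  next
    case False
    then have "\<epsilon>' m = \<epsilon> 0" unfolding \<epsilon>'_def using j(4) by simp
    have "e m x \<le> C1 * d x 0" by (rule C1b)
    also have "\<dots> \<le> C1 * r" using that(2) r(1) C1pos dnn[of x 0] by (simp add: mult_left_mono)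
    also have "\<dots> = (C1 * r / \<epsilon> 0) * \<epsilon> 0" using epos by simp
    also have "\<dots> \<le> C * \<epsilon>' m" using mult_right_mono[OF CC less_imp_le[OF epos]] \<open>\<epsilon>' m = \<epsilon> 0\<close> by simp
    finally show ?thesis .
  qed
  then show ?thesis using dec' Cpos r(1) by (intro exI[of _ \<epsilon>'] exI[of _ C] exI[of _ "r/2"]) auto
qed

end

lemma pos_eps:
  fixes \<epsilon> :: "nat \<Rightarrow> real"
  assumes "decr_to_zero \<epsilon>"
  shows "decr_to_zero (\<lambda>n. \<epsilon> n + inverse (real (Suc n)))" "\<And>n. \<epsilon> n + inverse (real (Suc n)) > 0"
proof -
  have e: "\<And>n. 0 \<le> \<epsilon> n" "decseq \<epsilon>" "\<epsilon> \<longlonglongrightarrow> 0" using assms unfolding decr_to_zero_def by auto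
  show "\<And>n. \<epsilon> n + inverse (real (Suc n)) > 0" using e(1) by (simp add: add_nonneg_pos)
  have "decseq (\<lambda>n. inverse (real (Suc n)))"
    by (rule decseq_SucI) (simp add: field_simps)
  then have "decseq (\<lambda>n. \<epsilon> n + inverse (real (Suc n)))"
    using e(2) unfolding decseq_def by (simp add: add_mono)
  moreover have "(\<lambda>n. \<epsilon> n + inverse (real (Suc n))) \<longlonglongrightarrow> 0 + 0"
    using e(3) LIMSEQ_inverse_real_of_nat by (intro tendsto_add) auto
  ultimately show "decr_to_zero (\<lambda>n. \<epsilon> n + inverse (real (Suc n)))"
    unfolding decr_to_zero_def using e(1) by (simp add: add_nonneg_nonneg)
qed

lemma O_to_bound:
  fixes \<epsilon> f :: "nat \<Rightarrow> real"
  assumes "decr_to_zero \<epsilon>" "f \<in> O(\<epsilon>)" "\<And>n. f n \<ge> 0"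
  shows "\<exists>c. \<forall>n. f n \<le> c * (\<epsilon> n + inverse (real (Suc n)))"
proof -
  have e: "\<And>n. 0 \<le> \<epsilon> n" using assms unfolding decr_to_zero_def by auto
  obtain c where c: "c > 0" "eventually (\<lambda>n. norm (f n) \<le> c * norm (\<epsilon> n)) at_top"
    using assms(2) by (rule landau_o.bigE)
  then obtain N where N: "\<And>n. n \<ge> N \<Longrightarrow> f n \<le> c * \<epsilon> n"
    unfolding eventually_at_top_linorder using e assms(3) by auto
  define B where "B = (\<Sum>n<N. f n)"
  have B0: "B \<ge> 0" unfolding B_def using assms(3) by (simp add: sum_nonneg)
  define c' where "c' = c + B * real N"
  show ?thesis
  proof (intro exI allI)
    fix n
    let ?E = "\<epsilon> n + inverse (real (Suc n))"
    have E0: "?E \<ge> 0" using e[of n] by simp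
    have "B * real N * ?E \<ge> 0" using B0 E0 by simp
    have "c * ?E \<ge> 0" using c(1) E0 by simp
    show "f n \<le> c' * ?E"
    proof (cases "n \<ge> N")
      case True
      have "f n \<le> c * \<epsilon> n" by (rule N[OF True])
      also have "\<dots> \<le> c * ?E" using c(1) by simp
      also have "\<dots> \<le> c' * ?E" unfolding c'_def using \<open>B * real N * ?E \<ge> 0\<close> by (simp add: distrib_right)
      finally show ?thesis .
    next
      case False
      then have "n < N" by simp
      have "f n \<le> B" unfolding B_def using \<open>n < N\<close> assms(3) by (intro member_le_sum) auto
      also have "B = B * (real N * inverse (real N))" using \<open>n < N\<close> by simp
      also have "\<dots> \<le> B * (real N * ?E)"
      proof -
        have "inverse (real N) \<le> inverse (real (Suc n))" using \<open>n < N\<close> by (simp add: le_imp_inverse_le)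
        then have "inverse (real N) \<le> ?E" using e[of n] by linarith
        then show ?thesis using B0 by (intro mult_left_mono) auto
      qed
      also have "\<dots> \<le> c' * ?E" unfolding c'_def using \<open>c * ?E \<ge> 0\<close> by (simp add: distrib_right)
      finally show ?thesis .
    qed
  qed
qed

theorem mainTheorem7:
  fixes d :: "'a::real_vector \<Rightarrow> 'a \<Rightarrow> real"
    and e :: "nat \<Rightarrow> 'a \<Rightarrow> real"
  assumes "F_space d" and "nondecreasing_metric d" and "is_scale d e"
  shows "((\<exists>\<epsilon>. decr_to_zero \<epsilon> \<and> (\<forall>x. (\<lambda>n. e n x) \<in> O(\<epsilon>)))
          \<longleftrightarrow> (\<exists>\<epsilon> C r0. decr_to_zero \<epsilon> \<and> C > 0 \<and> r0 > 0 \<and>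
                 (\<forall>n x. d x 0 \<le> r0 \<longrightarrow> e n x \<le> C * \<epsilon> n)))
       \<and> (satisfies_Shapiro e \<longleftrightarrow>
          (\<forall>r>0. (INF n. SUP x\<in>{x. d x 0 \<le> r} \<inter> scale_space e. e n x) > 0))"
proof -
  obtain C1 K C2 \<phi> where sc: "\<And>n x. 0 \<le> e n x" "C1 > 0" "\<And>x n. e n x \<le> C1 * d x 0"
    "\<And>x n. e (Suc n) x \<le> e n x"
    "\<And>n s x. (\<lambda>k. d (s k) x) \<longlonglongrightarrow> 0 \<Longrightarrow> (\<lambda>k. e n (s k)) \<longlonglongrightarrow> e n x"
    "strict_mono K" "C2 > 0" "\<And>x y n. e (K n) (x+y) \<le> C2*(e n x + e n y)"
    "\<And>t. t \<ge> 0 \<Longrightarrow> \<phi> t \<ge> 0" "\<And>n x c. e n (c *\<^sub>R x) \<le> \<phi> \<bar>c\<bar> * e n x"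
    "\<And>n x. e n (-x) = e n x"
    using assms(3) unfolding is_scale_def by metis
  interpret fsc d e K C1 C2 \<phi>
    by (rule fsc.intro) (use assms(1) sc in auto)
  have phi0: "\<phi> (1/c) \<ge> 0" if "c > 0" for c using sc(9) that by simp
  have scaleO: "(\<lambda>n. e n x) \<in> O(g)"
    if r: "r > 0" and xs: "x \<in> T" and T: "\<And>y c. y \<in> T \<Longrightarrow> c *\<^sub>R y \<in> T"
      and bd: "\<And>n y. y \<in> T \<Longrightarrow> d y 0 \<le> r \<Longrightarrow> e n y \<le> g n" for r x T and g :: "nat \<Rightarrow> real"
  proof -
    obtain c where c: "c > 0" "d (c *\<^sub>R x) 0 < r" using small[OF r] by blast
    have "e n x \<le> \<phi> (1/c) * g n" for n
    proof -
      have "e n x \<le> \<phi> (1/c) * e n (c *\<^sub>R x)" by (rule unscale[OF c(1)])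
      also have "\<dots> \<le> \<phi> (1/c) * g n" using bd[OF T[OF xs] ] c(2) phi0[OF c(1)] by (intro mult_left_mono) auto
      finally show ?thesis .
    qed
    then have "eventually (\<lambda>n. norm (e n x) \<le> \<phi> (1/c) * norm (g n)) at_top"
      using enn phi0[OF c(1)] by (intro always_eventually allI) (smt (verit, best) mult_left_mono real_norm_def abs_ge_self abs_of_nonneg)
    then show ?thesis by (rule bigoI)
  qed
  have P1: "(\<exists>\<epsilon>. decr_to_zero \<epsilon> \<and> (\<forall>x. (\<lambda>n. e n x) \<in> O(\<epsilon>)))
          \<longleftrightarrow> (\<exists>\<epsilon> C r0. decr_to_zero \<epsilon> \<and> C > 0 \<and> r0 > 0 \<and>
                 (\<forall>n x. d x 0 \<le> r0 \<longrightarrow> e n x \<le> C * \<epsilon> n))"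
  proof
    assume "\<exists>\<epsilon>. decr_to_zero \<epsilon> \<and> (\<forall>x. (\<lambda>n. e n x) \<in> O(\<epsilon>))"
    then obtain \<epsilon> where \<epsilon>: "decr_to_zero \<epsilon>" "\<And>x. (\<lambda>n. e n x) \<in> O(\<epsilon>)" by blast
    have "\<exists>\<epsilon>' C r0. decr_to_zero \<epsilon>' \<and> C > 0 \<and> r0 > 0 \<and>
           (\<forall>n x. x \<in> UNIV \<longrightarrow> d x 0 \<le> r0 \<longrightarrow> e n x \<le> C * \<epsilon>' n)"
      by (rule baire_bound[OF _ _ _ pos_eps[OF \<epsilon>(1)]]) (use O_to_bound[OF \<epsilon>(1) \<epsilon>(2) enn] in auto)
    then show "\<exists>\<epsilon> C r0. decr_to_zero \<epsilon> \<and> C > 0 \<and> r0 > 0 \<and>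
                 (\<forall>n x. d x 0 \<le> r0 \<longrightarrow> e n x \<le> C * \<epsilon> n)" by simp
  next
    assume "\<exists>\<epsilon> C r0. decr_to_zero \<epsilon> \<and> C > 0 \<and> r0 > 0 \<and>
                 (\<forall>n x. d x 0 \<le> r0 \<longrightarrow> e n x \<le> C * \<epsilon> n)"
    then obtain \<epsilon> C r0 where h: "decr_to_zero \<epsilon>" "r0 > 0" "\<And>n x. d x 0 \<le> r0 \<Longrightarrow> e n x \<le> C * \<epsilon> n" by blast
    have "(\<lambda>n. e n x) \<in> O(\<lambda>n. C * \<epsilon> n)" for x
      by (rule scaleO[OF h(2), of x UNIV]) (auto intro: h(3))
    moreover have "(\<lambda>n. C * \<epsilon> n) \<in> O(\<epsilon>)" by simp
    ultimately have "(\<lambda>n. e n x) \<in> O(\<epsilon>)" for x using landau_o.big_trans by blast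
    then show "\<exists>\<epsilon>. decr_to_zero \<epsilon> \<and> (\<forall>x. (\<lambda>n. e n x) \<in> O(\<epsilon>))" using h(1) by blast
  qed

  define A where "A r = {x. d x 0 \<le> r} \<inter> scale_space e" for r
  define Sp where "Sp r n = (SUP x\<in>A r. e n x)" for r n
  have A0: "0 \<in> A r" if "r \<ge> 0" for r unfolding A_def using that XE_zero by simp
  have bddA: "bdd_above ((\<lambda>x. e n x) ` A r)" for r n
  proof (rule bdd_aboveI2)
    fix x assume "x \<in> A r"
    then show "e n x \<le> C1 * r" using C1b[of n x] C1pos unfolding A_def
      by (smt (verit) IntD1 mem_Collect_eq mult_left_mono)
  qed
  have Sup_up: "e n x \<le> Sp r n" if "x \<in> A r" for r n x
    unfolding Sp_def by (rule cSUP_upper[OF that bddA])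
  have Sp0: "Sp r n \<ge> 0" if "r \<ge> 0" for r n using Sup_up[OF A0[OF that], of n] by simp
  have Sp_dec: "decseq (Sp r)" if "r \<ge> 0" for r
  proof (rule decseq_SucI)
    fix n
    show "Sp r (Suc n) \<le> Sp r n" unfolding Sp_def[of r "Suc n"]
    proof (rule cSUP_least)
      show "A r \<noteq> {}" using A0[OF that] by blast
      fix x assume "x \<in> A r"
      then show "e (Suc n) x \<le> Sp r n" using edec1[of n x] Sup_up[of x r n] by linarith
    qed
  qed
  have bddS: "bdd_below (range (Sp r))" if "r \<ge> 0" for r
    using Sp0[OF that] by (intro bdd_belowI2) auto
  have INF_eq: "(INF n. SUP x\<in>{x. d x 0 \<le> r} \<inter> scale_space e. e n x) = (INF n. Sp r n)" for r
    unfolding Sp_def A_def by simp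
  have P2: "satisfies_Shapiro e \<longleftrightarrow> (\<forall>r>0. (INF n. Sp r n) > 0)"
  proof
    assume Sh: "satisfies_Shapiro e"
    show "\<forall>r>0. (INF n. Sp r n) > 0"
    proof (rule ccontr)
      assume "\<not> ?thesis"
      then obtain r where r: "r > 0" "\<not> (INF n. Sp r n) > 0" by blast
      have "(INF n. Sp r n) \<ge> 0" using Sp0 r(1) by (intro cINF_greatest) auto
      then have I0: "(INF n. Sp r n) = 0" using r(2) by simp
      have "Sp r \<longlonglongrightarrow> (INF n. Sp r n)" using LIMSEQ_decseq_INF[OF bddS[of r] Sp_dec[of r]] r(1) by simp
      then have "Sp r \<longlonglongrightarrow> 0" using I0 by simp
      then have dz: "decr_to_zero (Sp r)" unfolding decr_to_zero_def using Sp0 Sp_dec r(1) by simp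
      then obtain x where x: "x \<in> scale_space e" "(\<lambda>n. e n x) \<notin> O(Sp r)"
        using Sh unfolding satisfies_Shapiro_def by blast
      have "(\<lambda>n. e n x) \<in> O(Sp r)"
      proof (rule scaleO[OF r(1) x(1)])
        show "\<And>y c. y \<in> scale_space e \<Longrightarrow> c *\<^sub>R y \<in> scale_space e" by (rule XE_scale)
        show "\<And>n y. y \<in> scale_space e \<Longrightarrow> d y 0 \<le> r \<Longrightarrow> e n y \<le> Sp r n"
          by (rule Sup_up) (simp add: A_def)
      qed
      then show False using x(2) by blast
    qed
  next
    assume pos: "\<forall>r>0. (INF n. Sp r n) > 0"
    show "satisfies_Shapiro e"
    proof (rule ccontr)
      assume "\<not> satisfies_Shapiro e"
      then obtain \<epsilon> where \<epsilon>: "decr_to_zero \<epsilon>" "\<And>x. x \<in> scale_space e \<Longrightarrow> (\<lambda>n. e n x) \<in> O(\<epsilon>)"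
        unfolding satisfies_Shapiro_def by blast
      have "\<exists>\<epsilon>' C r0. decr_to_zero \<epsilon>' \<and> C > 0 \<and> r0 > 0 \<and>
           (\<forall>n x. x \<in> scale_space e \<longrightarrow> d x 0 \<le> r0 \<longrightarrow> e n x \<le> C * \<epsilon>' n)"
      proof (rule baire_bound[OF _ XE_zero XE_add pos_eps[OF \<epsilon>(1)]])
        show "\<And>s x. (\<And>k. s k \<in> scale_space e) \<Longrightarrow> (\<lambda>k. d (s k) x) \<longlonglongrightarrow> 0 \<Longrightarrow> x \<in> scale_space e"
          by (rule XE_closed)
        show "\<And>x. x \<in> scale_space e \<Longrightarrow> \<exists>c. \<forall>n. e n x \<le> c * (\<epsilon> n + inverse (real (Suc n)))"
          using O_to_bound[OF \<epsilon>(1) \<epsilon>(2) enn] by blast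
      qed auto
      then obtain \<epsilon>' C r0 where h: "decr_to_zero \<epsilon>'" "r0 > 0"
        "\<And>n x. x \<in> scale_space e \<Longrightarrow> d x 0 \<le> r0 \<Longrightarrow> e n x \<le> C * \<epsilon>' n" by blast
      have le: "(INF n. Sp r0 n) \<le> C * \<epsilon>' n" for n
      proof -
        have "(INF n. Sp r0 n) \<le> Sp r0 n" using bddS[of r0] h(2) by (intro cINF_lower) auto
        also have "\<dots> \<le> C * \<epsilon>' n" unfolding Sp_def
        proof (rule cSUP_least)
          show "A r0 \<noteq> {}" using A0[of r0] h(2) by auto
          fix x assume "x \<in> A r0"
          then show "e n x \<le> C * \<epsilon>' n" using h(3) unfolding A_def by auto
        qed
        finally show ?thesis .
      qed
      have "(\<lambda>n. C * \<epsilon>' n) \<longlonglongrightarrow> C * 0" using h(1) unfolding decr_to_zero_def by (intro tendsto_intros) auto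
      then have "(INF n. Sp r0 n) \<le> 0" using le by (intro LIMSEQ_le_const[of "\<lambda>n. C * \<epsilon>' n"]) auto
      then show False using pos h(2) by force
    qed
  qed
  show ?thesis using P1 P2 INF_eq by simp
qed

end
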